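(* For integers $1\le k\le n$, the number of binary words of length $n+k-1$ with exactly $2k-1$ zeros equals the number of words of length $n-1$ over the alphabet $\{0,1,2\}$ having exactly $k-1$ letters equal to $2$ and avoiding $01$ (no letter $0$ is immediately followed by the letter $1$).
   Context: Words may be empty. *)

theory Defs
  imports Main
begin

definition words :: "nat \<Rightarrow> nat \<Rightarrow> nat list set" where
  "words q m = {w. length w = m \<and> set w \<subseteq> {..<q}}"

definition avoids01 :: "nat list \<Rightarrow> bool" where
  "avoids01 w \<longleftrightarrow> (\<forall>i. Suc i < length w \<longrightarrow> \<not> (w ! i = 0 \<and> w ! Suc i = 1))"

end

theory Submission
  imports Defs
begin

lemma avoids01_Nil: "avoids01 []" by (simp add: avoids01_def)

lemma avoids01_Cons:
  "avoids01 (c # w) \<longleftrightarrow> avoids01 w \<and> \<not> (c = 0 \<and> w \<noteq> [] \<and> hd w = 1)"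
proof
  assume a: "avoids01 (c # w)"
  have "avoids01 w" unfolding avoids01_def
  proof (intro allI impI)
    fix i assume "Suc i < length w"
    with a show "\<not> (w ! i = 0 \<and> w ! Suc i = 1)"
      unfolding avoids01_def by (metis Suc_less_eq length_Cons nth_Cons_Suc)
  qed
  moreover have "\<not> (c = 0 \<and> w \<noteq> [] \<and> hd w = 1)"
  proof
    assume h: "c = 0 \<and> w \<noteq> [] \<and> hd w = 1"
    then have "Suc 0 < length (c # w)" by simp
    with a h show False unfolding avoids01_def
      by (metis hd_conv_nth nth_Cons_0 nth_Cons_Suc)
  qed
  ultimately show "avoids01 w \<and> \<not> (c = 0 \<and> w \<noteq> [] \<and> hd w = 1)" by blast
next
  assume a: "avoids01 w \<and> \<not> (c = 0 \<and> w \<noteq> [] \<and> hd w = 1)"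
  show "avoids01 (c # w)" unfolding avoids01_def
  proof (intro allI impI)
    fix i assume i: "Suc i < length (c # w)"
    show "\<not> ((c # w) ! i = 0 \<and> (c # w) ! Suc i = 1)"
    proof (cases i)
      case 0
      then show ?thesis using a i by (auto simp: hd_conv_nth)
    next
      case (Suc i')
      then show ?thesis using a i unfolding avoids01_def by auto
    qed
  qed
qed

definition Pset :: "nat \<Rightarrow> nat \<Rightarrow> nat list set" where
  "Pset m j = {w. length w = m \<and> set w \<subseteq> {..<3} \<and> count_list w 2 = j \<and> avoids01 w}"

definition Qset :: "nat \<Rightarrow> nat \<Rightarrow> nat list set" where
  "Qset m j = {w \<in> Pset m j. \<not> (w \<noteq> [] \<and> hd w = 1)}"

definition Bset :: "nat \<Rightarrow> nat \<Rightarrow> nat list set" where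
  "Bset m z = {w. length w = m \<and> set w \<subseteq> {..<2} \<and> count_list w 0 = z}"

lemma fin_P: "finite (Pset m j)"
proof -
  have "Pset m j \<subseteq> {w. set w \<subseteq> {..<3} \<and> length w = m}" unfolding Pset_def by auto
  moreover have "finite {w. set w \<subseteq> {..<3::nat} \<and> length w = m}"
    by (rule finite_lists_length_eq) simp
  ultimately show ?thesis by (rule finite_subset)
qed

lemma fin_Q: "finite (Qset m j)"
  using fin_P[of m j] unfolding Qset_def by auto

lemma fin_B: "finite (Bset m j)"
proof -
  have "Bset m j \<subseteq> {w. set w \<subseteq> {..<2} \<and> length w = m}" unfolding Bset_def by auto
  moreover have "finite {w. set w \<subseteq> {..<2::nat} \<and> length w = m}"
    by (rule finite_lists_length_eq) simp
  ultimately show ?thesis by (rule finite_subset)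
qed

lemma P0: "Pset 0 j = (if j = 0 then {[]} else {})"
  by (auto simp: Pset_def avoids01_Nil)

lemma Q0: "Qset 0 j = (if j = 0 then {[]} else {})"
  by (auto simp: Qset_def Pset_def avoids01_Nil)

lemma B0: "Bset 0 j = (if j = 0 then {[]} else {})"
  by (auto simp: Bset_def)

lemma less3: "(x::nat) < 3 \<longleftrightarrow> x = 0 \<or> x = 1 \<or> x = 2" by auto
lemma less2: "(x::nat) < 2 \<longleftrightarrow> x = 0 \<or> x = 1" by auto

lemma P_Suc_0: "Pset (Suc m) 0 = (#) 0 ` Qset m 0 \<union> (#) 1 ` Pset m 0"
  apply (rule set_eqI)
  apply (auto simp: Pset_def Qset_def avoids01_Cons length_Suc_conv less3)
  done

lemma P_Suc_Suc: "Pset (Suc m) (Suc j) = (#) 0 ` Qset m (Suc j) \<union> (#) 1 ` Pset m (Suc j) \<union> (#) 2 ` Pset m j"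
  apply (rule set_eqI)
  apply (auto simp: Pset_def Qset_def avoids01_Cons length_Suc_conv less3)
  done

lemma Q_Suc_0: "Qset (Suc m) 0 = (#) 0 ` Qset m 0"
  apply (rule set_eqI)
  apply (auto simp: Pset_def Qset_def avoids01_Cons length_Suc_conv less3)
  done

lemma Q_Suc_Suc: "Qset (Suc m) (Suc j) = (#) 0 ` Qset m (Suc j) \<union> (#) 2 ` Pset m j"
  apply (rule set_eqI)
  apply (auto simp: Pset_def Qset_def avoids01_Cons length_Suc_conv less3)
  done

lemma B_Suc_0: "Bset (Suc m) 0 = (#) 1 ` Bset m 0"
  apply (rule set_eqI)
  apply (auto simp: Bset_def length_Suc_conv less2)
  done

lemma B_Suc_Suc: "Bset (Suc m) (Suc j) = (#) 1 ` Bset m (Suc j) \<union> (#) 0 ` Bset m j"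
  apply (rule set_eqI)
  apply (auto simp: Bset_def length_Suc_conv less2)
  done

lemma card_img: "card ((#) (x::nat) ` A) = card A"
  by (rule card_image) (auto simp: inj_on_def)

lemma card_B: "card (Bset m z) = m choose z"
proof (induction m arbitrary: z)
  case 0 then show ?case by (simp add: B0)
next
  case (Suc m)
  show ?case
  proof (cases z)
    case 0 then show ?thesis using Suc by (simp add: B_Suc_0 card_img)
  next
    case (Suc z')
    have "card (Bset (Suc m) (Suc z')) = card ((#) 1 ` Bset m (Suc z')) + card ((#) 0 ` Bset m z')"
      unfolding B_Suc_Suc by (rule card_Un_disjoint) (auto simp: fin_B)
    then show ?thesis using Suc.IH Suc by (simp add: card_img)
  qed
qed

lemma card_PQ: "card (Pset m j) = (m + j + 1) choose (2*j+1) \<and> card (Qset m j) = (m + j) choose (2*j)"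
proof (induction m arbitrary: j)
  case 0 then show ?case by (simp add: P0 Q0)
next
  case (Suc m)
  show ?case
  proof (cases j)
    case 0
    have "card (Pset (Suc m) 0) = card ((#) 0 ` Qset m 0) + card ((#) 1 ` Pset m 0)"
      unfolding P_Suc_0 by (rule card_Un_disjoint) (auto simp: fin_P fin_Q)
    then show ?thesis using Suc.IH[of 0] 0 by (simp add: card_img Q_Suc_0)
  next
    case (Suc j')
    have a: "card (Pset (Suc m) (Suc j')) = card ((#) 0 ` Qset m (Suc j')) + card ((#) 1 ` Pset m (Suc j')) + card ((#) 2 ` Pset m j')"
      unfolding P_Suc_Suc
      by (subst card_Un_disjoint; (auto simp: fin_P fin_Q)?) (subst card_Un_disjoint; auto simp: fin_P fin_Q)
    have b: "card (Qset (Suc m) (Suc j')) = card ((#) 0 ` Qset m (Suc j')) + card ((#) 2 ` Pset m j')"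
      unfolding Q_Suc_Suc by (rule card_Un_disjoint) (auto simp: fin_P fin_Q)
    have i1: "card (Pset m (Suc j')) = (m + j' + 2) choose (2*j'+3)"
      and i2: "card (Qset m (Suc j')) = (m + j' + 1) choose (2*j'+2)"
    proof -
      have "m + Suc j' + 1 = m + j' + 2" "2 * Suc j' + 1 = 2*j'+3" "m + Suc j' = m + j' + 1" "2 * Suc j' = 2*j'+2" by simp_all
      then show "card (Pset m (Suc j')) = (m + j' + 2) choose (2*j'+3)"
        "card (Qset m (Suc j')) = (m + j' + 1) choose (2*j'+2)"
        using Suc.IH[of "Suc j'"] by metis+
    qed
    have i3: "card (Pset m j') = (m + j' + 1) choose (2*j'+1)" using Suc.IH[of j'] by blast
    have e1: "((m + j' + 1) choose (2*j'+2)) + ((m + j' + 1) choose (2*j'+1)) = (m + j' + 2) choose (2*j'+2)"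
      using choose_reduce_nat[of "m+j'+2" "2*j'+2"] by (simp del: binomial_Suc_Suc add: numeral_eq_Suc)
    have e2: "((m + j' + 2) choose (2*j'+2)) + ((m + j' + 2) choose (2*j'+3)) = (m + j' + 3) choose (2*j'+3)"
      using choose_reduce_nat[of "m+j'+3" "2*j'+3"] by (simp del: binomial_Suc_Suc add: numeral_eq_Suc)
    have "card (Pset (Suc m) (Suc j')) = (m + j' + 3) choose (2*j'+3)"
      using a i1 i2 i3 e1 e2 unfolding card_img by linarith
    moreover have "card (Qset (Suc m) (Suc j')) = (m + j' + 2) choose (2*j'+2)"
      using b i2 i3 e1 unfolding card_img by linarith
    moreover have "Suc m + Suc j' + 1 = m + j' + 3" "2 * Suc j' + 1 = 2*j'+3"
      "Suc m + Suc j' = m + j' + 2" "2 * Suc j' = 2*j'+2" by simp_all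
    ultimately show ?thesis using Suc by metis
  qed
qed

theorem mainTheorem16:
  fixes n k :: nat
  assumes "1 \<le> k" and "k \<le> n"
  shows "card {w \<in> words 2 (n + k - 1). count_list w 0 = 2 * k - 1}
       = card {w \<in> words 3 (n - 1). count_list w 2 = k - 1 \<and> avoids01 w}"
proof -
  have l: "{w \<in> words 2 (n + k - 1). count_list w 0 = 2 * k - 1} = Bset (n+k-1) (2*k-1)"
    by (auto simp: words_def Bset_def)
  have r: "{w \<in> words 3 (n - 1). count_list w 2 = k - 1 \<and> avoids01 w} = Pset (n-1) (k-1)"
    by (auto simp: words_def Pset_def)
  have "card (Pset (n-1) (k-1)) = (n - 1 + (k - 1) + 1) choose (2*(k-1)+1)" using card_PQ by blast
  moreover have "n - 1 + (k - 1) + 1 = n + k - 1" "2*(k-1)+1 = 2*k-1" using assms by auto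
  ultimately show ?thesis unfolding l r card_B by metis
qed

end
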